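(* Let $N\in\mathbb{N}^*$ and let $W$ be a symmetric $N\times N$ random matrix whose entries on and above the diagonal are i.i.d. centred Gaussian with some variance $\sigma^2>0$. For $T\in\mathbb{N}^*$ let $B_{T,N}$ be its generalised matrix of moments of order $T$, with eigenvalues $\lambda_T(B_{T,N})\le\cdots\le\lambda_0(B_{T,N})=\lambda_{\max}(B_{T,N})$. Then \[ \frac{\lambda_{\max}(B_{T,N})}{\sum_{i=0}^T\lambda_i(B_{T,N})}\xrightarrow[T\to\infty]{}1, \qquad\text{and}\qquad \lambda_{\max}(B_{T,N})\simeq B_{T,N}(T,T)\ \text{ as } T\to\infty. \]
   Context: Generalised matrix of moments: for $i\in[N]$, $\beta_{i,0}=1$, $\beta_{i,l}=\sum_{i_1,\ldots,i_l=1}^N W_{ii_1}\cdots W_{i_{l-1}i_l}$ for $l\ge1$, and $B_{T,N}(l_1,l_2)=\mathbb{E}\sum_{i=1}^N\beta_{i,l_1}\beta_{i,l_2}$. $x_T\simeq y_T$ means $x_T/y_T\to1$. *)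

theory Defs
  imports "HOL-Probability.Probability" "Jordan_Normal_Form.Char_Poly"
begin

text \<open>Gaussian symmetric N x N matrix: the independent entries are indexed by
  pairs (i,j) with i \<le> j < N (indices 0..N-1 instead of 1..N), each distributed
  as a centred normal with standard deviation sigma (variance sigma^2).\<close>

definition upper_idx :: "nat \<Rightarrow> (nat \<times> nat) set" where
  "upper_idx N = {(i, j). i \<le> j \<and> j < N}"

definition gauss_entries :: "nat \<Rightarrow> real \<Rightarrow> ((nat \<times> nat) \<Rightarrow> real) measure" where
  "gauss_entries N \<sigma> = PiM (upper_idx N) (\<lambda>_. density lborel (normal_density 0 \<sigma>))"

definition Wmat :: "((nat \<times> nat) \<Rightarrow> real) \<Rightarrow> nat \<Rightarrow> nat \<Rightarrow> real" where
  "Wmat x i j = x (min i j, max i j)"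

text \<open>beta_{i,l} = sum over i_1..i_l in [N] of W_{i i_1} W_{i_1 i_2} ... W_{i_{l-1} i_l};
  an index path is p on {1..l} with p 0 := i. For l = 0 the sum is over the single
  empty path and the empty product is 1.\<close>

definition beta :: "nat \<Rightarrow> ((nat \<times> nat) \<Rightarrow> real) \<Rightarrow> nat \<Rightarrow> nat \<Rightarrow> real" where
  "beta N x i l = (\<Sum>p \<in> PiE {1..l} (\<lambda>_. {..<N}).
      \<Prod>k\<in>{1..l}. Wmat x ((p(0 := i)) (k - 1)) ((p(0 := i)) k))"

definition Bent :: "nat \<Rightarrow> real \<Rightarrow> nat \<Rightarrow> nat \<Rightarrow> real" where
  "Bent N \<sigma> l1 l2 = (\<integral>x. (\<Sum>i<N. beta N x i l1 * beta N x i l2) \<partial>gauss_entries N \<sigma>)"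

definition Bmat :: "nat \<Rightarrow> nat \<Rightarrow> real \<Rightarrow> real mat" where
  "Bmat T N \<sigma> = mat (Suc T) (Suc T) (\<lambda>(l1, l2). Bent N \<sigma> l1 l2)"

definition lambda_max :: "real mat \<Rightarrow> real" where
  "lambda_max A = Max {k. eigenvalue A k}"

definition eig_sum :: "real mat \<Rightarrow> real" where
  "eig_sum A = (\<Sum>k\<in>{k. eigenvalue A k}. of_nat (order k (char_poly A)) * k)"

end

theory Submission
  imports Defs "Jordan_Normal_Form.Schur_Decomposition"
begin

definition Gp :: "((nat \<times> nat) \<Rightarrow> real) \<Rightarrow> nat \<Rightarrow> nat \<Rightarrow> nat \<Rightarrow> nat \<Rightarrow> real" where
  "Gp x N a l i = (\<Sum>p \<in> PiE {Suc a..a+l} (\<lambda>_. {..<N}).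
      \<Prod>k\<in>{Suc a..a+l}. Wmat x ((p(a := i)) (k - 1)) ((p(a := i)) k))"

fun bp :: "((nat \<times> nat) \<Rightarrow> real) \<Rightarrow> nat \<Rightarrow> nat \<Rightarrow> nat \<Rightarrow> real" where
  "bp x N 0 i = 1"
| "bp x N (Suc l) i = (\<Sum>j<N. Wmat x i j * bp x N l j)"

lemma Gp_Suc: "Gp x N a (Suc l) i = (\<Sum>j<N. Wmat x i j * Gp x N (Suc a) l j)"
proof -
  let ?S = "{Suc (Suc a)..Suc a + l}"
  have I: "{Suc a..a + Suc l} = insert (Suc a) ?S" by auto
  have nin: "Suc a \<notin> ?S" by auto
  let ?F = "\<lambda>p. \<Prod>k\<in>{Suc a..a+Suc l}. Wmat x ((p(a := i)) (k - 1)) ((p(a := i)) k)"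
  have inj: "inj_on (\<lambda>(y, g). g(Suc a := y)) ({..<N} \<times> PiE ?S (\<lambda>_. {..<N}))"
    using inj_combinator[OF nin, of "\<lambda>_. {..<N}"] by simp
  have "Gp x N a (Suc l) i = sum ?F (PiE {Suc a..a + Suc l} (\<lambda>_. {..<N}))"
    unfolding Gp_def by simp
  also have "\<dots> = sum ?F ((\<lambda>(y, g). g(Suc a := y)) ` ({..<N} \<times> PiE ?S (\<lambda>_. {..<N})))"
    unfolding I PiE_insert_eq by simp
  also have "\<dots> = (\<Sum>(y,g)\<in>{..<N} \<times> PiE ?S (\<lambda>_. {..<N}). ?F (g(Suc a := y)))"
    by (subst sum.reindex[OF inj]) (simp add: case_prod_unfold)
  also have "\<dots> = (\<Sum>y<N. \<Sum>g\<in>PiE ?S (\<lambda>_. {..<N}). ?F (g(Suc a := y)))"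
    by (rule sum.cartesian_product[symmetric])
  also have "\<dots> = (\<Sum>y<N. Wmat x i y * Gp x N (Suc a) l y)"
  proof (rule sum.cong[OF refl])
    fix y assume y: "y \<in> {..<N}"
    have "?F (g(Suc a := y)) = Wmat x i y * (\<Prod>k\<in>?S. Wmat x ((g(Suc a := y)) (k - 1)) ((g(Suc a := y)) k))" for g
    proof -
      have "?F (g(Suc a := y)) = Wmat x i y * (\<Prod>k\<in>?S. Wmat x ((g(Suc a := y, a := i)) (k - 1)) ((g(Suc a := y, a := i)) k))"
        unfolding I using nin by (simp add: prod.insert)
      also have "(\<Prod>k\<in>?S. Wmat x ((g(Suc a := y, a := i)) (k - 1)) ((g(Suc a := y, a := i)) k))
         = (\<Prod>k\<in>?S. Wmat x ((g(Suc a := y)) (k - 1)) ((g(Suc a := y)) k))"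
        by (rule prod.cong) auto
      finally show ?thesis .
    qed
    then show "(\<Sum>g\<in>PiE ?S (\<lambda>_. {..<N}). ?F (g(Suc a := y))) = Wmat x i y * Gp x N (Suc a) l y"
      unfolding Gp_def by (simp add: sum_distrib_left)
  qed
  finally show ?thesis .
qed

lemma Gp_bp: "Gp x N a l i = bp x N l i"
proof (induction l arbitrary: a i)
  case 0
  then show ?case by (simp add: Gp_def)
next
  case (Suc l)
  then show ?case by (simp add: Gp_Suc)
qed

lemma beta_bp: "beta N x i l = bp x N l i"
  using Gp_bp[of x N 0 l i] unfolding Gp_def beta_def by simp


definition allmom :: "'a measure \<Rightarrow> ('a \<Rightarrow> real) \<Rightarrow> bool" where
  "allmom M f \<longleftrightarrow> f \<in> borel_measurable M \<and> (\<forall>p::nat. integrable M (\<lambda>x. \<bar>f x\<bar> ^ p))"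

lemma allmom_const: "prob_space M \<Longrightarrow> allmom M (\<lambda>_. c)"
  unfolding allmom_def by (auto intro: finite_measure.integrable_const prob_space.finite_measure)

lemma allmom_mult:
  assumes f: "allmom M f" and g: "allmom M g"
  shows "allmom M (\<lambda>x. f x * g x)"
  unfolding allmom_def
proof (intro conjI allI)
  have [measurable]: "f \<in> borel_measurable M" "g \<in> borel_measurable M"
    using f g by (auto simp: allmom_def)
  show "(\<lambda>x. f x * g x) \<in> borel_measurable M" by measurable
  fix p :: nat
  have i: "integrable M (\<lambda>x. \<bar>f x\<bar> ^ (2*p) + \<bar>g x\<bar> ^ (2*p))"
    using f g by (auto simp: allmom_def)
  show "integrable M (\<lambda>x. \<bar>f x * g x\<bar> ^ p)"
  proof (rule Bochner_Integration.integrable_bound[OF i])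
    show "(\<lambda>x. \<bar>f x * g x\<bar> ^ p) \<in> borel_measurable M" by measurable
    show "AE x in M. norm (\<bar>f x * g x\<bar> ^ p) \<le> norm (\<bar>f x\<bar> ^ (2*p) + \<bar>g x\<bar> ^ (2*p))"
    proof (intro AE_I2)
      fix x
      let ?a = "\<bar>f x\<bar> ^ p" and ?b = "\<bar>g x\<bar> ^ p"
      have h1: "0 \<le> ?a" "0 \<le> ?b" by simp_all
      have "0 \<le> (?a - ?b)^2" by simp
      then have "2*(?a*?b) \<le> ?a^2 + ?b^2" by (simp add: power2_eq_square algebra_simps)
      moreover have "0 \<le> ?a*?b" using h1 by simp
      ultimately have "?a * ?b \<le> ?a^2 + ?b^2" by linarith
      then show "norm (\<bar>f x * g x\<bar> ^ p) \<le> norm (\<bar>f x\<bar> ^ (2*p) + \<bar>g x\<bar> ^ (2*p))"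
        by (simp add: abs_mult power_mult_distrib power_mult[symmetric] mult.commute)
    qed
  qed
qed

lemma allmom_add:
  assumes f: "allmom M f" and g: "allmom M g"
  shows "allmom M (\<lambda>x. f x + g x)"
  unfolding allmom_def
proof (intro conjI allI)
  have [measurable]: "f \<in> borel_measurable M" "g \<in> borel_measurable M"
    using f g by (auto simp: allmom_def)
  show "(\<lambda>x. f x + g x) \<in> borel_measurable M" by measurable
  fix p :: nat
  have i: "integrable M (\<lambda>x. 2^p * (\<bar>f x\<bar> ^ p + \<bar>g x\<bar> ^ p))"
    using f g by (auto simp: allmom_def)
  show "integrable M (\<lambda>x. \<bar>f x + g x\<bar> ^ p)"
  proof (rule Bochner_Integration.integrable_bound[OF i])
    show "(\<lambda>x. \<bar>f x + g x\<bar> ^ p) \<in> borel_measurable M" by measurable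
    show "AE x in M. norm (\<bar>f x + g x\<bar> ^ p) \<le> norm (2^p * (\<bar>f x\<bar> ^ p + \<bar>g x\<bar> ^ p))"
    proof (intro AE_I2)
      fix x
      let ?m = "max \<bar>f x\<bar> \<bar>g x\<bar>"
      have "\<bar>f x + g x\<bar> \<le> 2 * ?m" by linarith
      then have "\<bar>f x + g x\<bar> ^ p \<le> (2 * ?m) ^ p" by (rule power_mono) simp
      also have "\<dots> = 2^p * ?m^p" by (simp add: power_mult_distrib)
      also have "?m^p \<le> \<bar>f x\<bar> ^ p + \<bar>g x\<bar> ^ p"
        by (cases "\<bar>f x\<bar> \<le> \<bar>g x\<bar>") (auto simp: max_def)
      finally show "norm (\<bar>f x + g x\<bar> ^ p) \<le> norm (2^p * (\<bar>f x\<bar> ^ p + \<bar>g x\<bar> ^ p))"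
        by simp
    qed
  qed
qed

lemma allmom_sum:
  assumes "prob_space M" "\<And>i. i \<in> A \<Longrightarrow> allmom M (f i)"
  shows "allmom M (\<lambda>x. \<Sum>i\<in>A. f i x)"
  using assms(2)
proof (induction A rule: infinite_finite_induct)
  case (infinite A) then show ?case using allmom_const[OF assms(1)] by simp
next
  case empty then show ?case using allmom_const[OF assms(1)] by simp
next
  case (insert a A)
  have 1: "allmom M (f a)" using insert.prems by simp
  have 2: "allmom M (\<lambda>x. \<Sum>i\<in>A. f i x)" using insert.IH insert.prems by simp
  have "allmom M (\<lambda>x. f a x + (\<Sum>i\<in>A. f i x))" by (rule allmom_add[OF 1 2])
  then show ?case using insert.hyps by simp
qed

lemma allmom_integrable: "allmom M f \<Longrightarrow> integrable M f"
proof -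
  assume h: "allmom M f"
  then have m: "f \<in> borel_measurable M" and "integrable M (\<lambda>x. \<bar>f x\<bar> ^ 1)"
    unfolding allmom_def by blast+
  then have "integrable M (\<lambda>x. \<bar>f x\<bar>)" by simp
  then show ?thesis using integrable_abs_iff[OF m] by blast
qed

lemma prob_space_gauss: "\<sigma> > 0 \<Longrightarrow> prob_space (gauss_entries N \<sigma>)"
  unfolding gauss_entries_def by (rule prob_space_PiM) (rule prob_space_normal_density)

lemma allmom_coord:
  assumes \<sigma>: "\<sigma> > 0" and e: "e \<in> upper_idx N"
  shows "allmom (gauss_entries N \<sigma>) (\<lambda>x. x e)"
  unfolding allmom_def
proof (intro conjI allI)
  let ?G = "density lborel (normal_density 0 \<sigma>)"
  have meas: "(\<lambda>x. x e) \<in> measurable (gauss_entries N \<sigma>) ?G"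
    unfolding gauss_entries_def using e by (rule measurable_component_singleton)
  then show "(\<lambda>x. x e) \<in> borel_measurable (gauss_entries N \<sigma>)"
    by (simp add: measurable_def space_density sets_density)
  fix p :: nat
  have "integrable lborel (\<lambda>y. normal_density 0 \<sigma> y * \<bar>y - 0\<bar> ^ p)"
    using integrable_normal_moment_abs[OF \<sigma>] by blast
  then have "integrable ?G (\<lambda>y. \<bar>y\<bar> ^ p)"
    by (subst integrable_density) auto
  then have "integrable (distr (gauss_entries N \<sigma>) ?G (\<lambda>x. x e)) (\<lambda>y. \<bar>y\<bar> ^ p)"
    unfolding gauss_entries_def
    by (subst distr_PiM_component[OF prob_space_normal_density[OF \<sigma>] e])
  then show "integrable (gauss_entries N \<sigma>) (\<lambda>x. \<bar>x e\<bar> ^ p)"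
    using meas by (subst (asm) integrable_distr_eq) auto
qed

lemma allmom_W:
  assumes \<sigma>: "\<sigma> > 0" and "i < N" "j < N"
  shows "allmom (gauss_entries N \<sigma>) (\<lambda>x. Wmat x i j)"
  unfolding Wmat_def using assms by (intro allmom_coord) (auto simp: upper_idx_def)

lemma allmom_bp:
  assumes \<sigma>: "\<sigma> > 0" and "i < N"
  shows "allmom (gauss_entries N \<sigma>) (\<lambda>x. bp x N l i)"
  using assms(2)
proof (induction l arbitrary: i)
  case 0 then show ?case by (simp add: allmom_const prob_space_gauss[OF \<sigma>])
next
  case (Suc l)
  then show ?case
    by (simp, intro allmom_sum prob_space_gauss[OF \<sigma>] allmom_mult allmom_W[OF \<sigma>]) auto
qed

definition Sf :: "((nat \<times> nat) \<Rightarrow> real) \<Rightarrow> nat \<Rightarrow> nat \<Rightarrow> nat \<Rightarrow> real" where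
  "Sf x N a b = (\<Sum>i<N. bp x N a i * bp x N b i)"

lemma allmom_Sf: "\<sigma> > 0 \<Longrightarrow> allmom (gauss_entries N \<sigma>) (\<lambda>x. Sf x N a b)"
  unfolding Sf_def by (intro allmom_sum prob_space_gauss allmom_mult allmom_bp) auto

lemma integrable_Sf: "\<sigma> > 0 \<Longrightarrow> integrable (gauss_entries N \<sigma>) (\<lambda>x. Sf x N a b)"
  by (rule allmom_integrable[OF allmom_Sf])

lemma Bent_Sf: "Bent N \<sigma> a b = (\<integral>x. Sf x N a b \<partial>gauss_entries N \<sigma>)"
  unfolding Bent_def Sf_def beta_bp ..

lemma Wmat_sym: "Wmat x i j = Wmat x j i"
  unfolding Wmat_def by (simp add: min.commute max.commute)

lemma Sf_shift: "Sf x N a (Suc b) = Sf x N (Suc a) b"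
proof -
  have "Sf x N a (Suc b) = (\<Sum>i<N. \<Sum>j<N. bp x N a i * Wmat x i j * bp x N b j)"
    unfolding Sf_def by (simp add: sum_distrib_left mult.assoc)
  also have "\<dots> = (\<Sum>j<N. \<Sum>i<N. bp x N a i * Wmat x i j * bp x N b j)"
    by (rule sum.swap)
  also have "\<dots> = (\<Sum>j<N. \<Sum>i<N. Wmat x j i * bp x N a i * bp x N b j)"
    by (intro sum.cong refl) (simp add: Wmat_sym[of x i j for i j])
  also have "\<dots> = Sf x N (Suc a) b"
    unfolding Sf_def by (simp add: sum_distrib_right)
  finally show ?thesis .
qed

lemma Sf_sum: "Sf x N a b = Sf x N (a + b) 0"
  by (induction b arbitrary: a) (simp_all add: Sf_shift)

lemma Bent_sum: "Bent N \<sigma> a b = Bent N \<sigma> (a + b) 0"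
proof -
  have "\<And>x. Sf x N a b = Sf x N (a + b) 0" by (rule Sf_sum)
  then show ?thesis unfolding Bent_Sf by presburger
qed

lemma Bent_eq: assumes "a + b = c + d" shows "Bent N \<sigma> a b = Bent N \<sigma> c d"
proof -
  have "Bent N \<sigma> a b = Bent N \<sigma> (a + b) 0" by (rule Bent_sum)
  also have "\<dots> = Bent N \<sigma> c d" unfolding assms by (rule Bent_sum[symmetric])
  finally show ?thesis .
qed


lemma bp_lower:
  assumes W: "\<And>i j. i < N \<Longrightarrow> j < N \<Longrightarrow> a \<le> Wmat x i j" and a: "0 \<le> a" and i: "i < N"
  shows "(a * N) ^ l \<le> bp x N l i"
  using i
proof (induction l arbitrary: i)
  case 0 then show ?case by simp
next
  case (Suc l)
  have "(a * N) ^ Suc l = (\<Sum>j<N. a * (a * N) ^ l)" by (simp add: algebra_simps)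
  also have "\<dots> \<le> (\<Sum>j<N. Wmat x i j * bp x N l j)"
  proof (rule sum_mono)
    fix j assume j: "j \<in> {..<N}"
    show "a * (a * real N) ^ l \<le> Wmat x i j * bp x N l j"
      using W[OF Suc.prems, of j] Suc.IH[of j] j a by (intro mult_mono) auto
  qed
  finally show ?case by simp
qed

lemma Sf_nonneg: "0 \<le> Sf x N k k"
  unfolding Sf_def by (intro sum_nonneg) simp

lemma Sf_lower:
  assumes W: "\<And>i j. i < N \<Longrightarrow> j < N \<Longrightarrow> a \<le> Wmat x i j" and a: "0 \<le> a" and N: "1 \<le> N"
  shows "(a * N) ^ (2 * k) \<le> Sf x N k k"
proof -
  have b: "(a * N) ^ k \<le> bp x N k 0" using bp_lower[OF W a, where i=0 and l=k] N by simp
  have "(a * N) ^ (2 * k) = ((a * N) ^ k)^2" by (simp add: power_mult mult.commute)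
  also have "\<dots> \<le> (bp x N k 0)^2" using b a by (intro power_mono) auto
  also have "\<dots> \<le> Sf x N k k"
    unfolding Sf_def power2_eq_square
    using N by (intro member_le_sum[where f="\<lambda>i. bp x N k i * bp x N k i"]) auto
  finally show ?thesis .
qed

definition Aev :: "nat \<Rightarrow> real \<Rightarrow> ((nat \<times> nat) \<Rightarrow> real) set" where
  "Aev N a = PiE (upper_idx N) (\<lambda>_. {a..a+1})"

lemma finite_upper_idx: "finite (upper_idx N)"
proof -
  have "upper_idx N \<subseteq> {..<N} \<times> {..<N}" by (auto simp: upper_idx_def)
  then show ?thesis by (rule finite_subset) auto
qed

lemma Aev_W: "x \<in> Aev N a \<Longrightarrow> i < N \<Longrightarrow> j < N \<Longrightarrow> a \<le> Wmat x i j"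
  unfolding Aev_def Wmat_def upper_idx_def by (auto simp: PiE_iff)

lemma Aev_sets: "Aev N a \<in> sets (gauss_entries N \<sigma>)"
  unfolding Aev_def gauss_entries_def
  by (rule sets_PiM_I_finite[OF finite_upper_idx]) auto

lemma normal_interval_pos:
  assumes \<sigma>: "\<sigma> > 0" and a: "0 \<le> a"
  shows "0 < emeasure (density lborel (normal_density 0 \<sigma>)) {a..a+1}"
proof -
  let ?c = "normal_density 0 \<sigma> (a+1)"
  have c: "0 < ?c" by (rule normal_density_pos[OF \<sigma>])
  have le: "ennreal ?c * indicator {a..a+1} x \<le> ennreal (normal_density 0 \<sigma> x) * indicator {a..a+1} x" for x
  proof (cases "x \<in> {a..a+1}")
    case True
    then have "x^2 \<le> (a+1)^2" using a by (intro power_mono) auto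
    then have "-((a+1)^2) / (2 * \<sigma>^2) \<le> -(x^2) / (2 * \<sigma>^2)"
      by (intro divide_right_mono) auto
    then have "exp (-((a+1)^2) / (2 * \<sigma>^2)) \<le> exp (-(x^2) / (2 * \<sigma>^2))"
      by simp
    then have "?c \<le> normal_density 0 \<sigma> x"
      unfolding normal_density_def by (intro mult_left_mono) auto
    then show ?thesis using True by simp
  qed simp
  have "emeasure (density lborel (normal_density 0 \<sigma>)) {a..a+1}
      = (\<integral>\<^sup>+ x. ennreal (normal_density 0 \<sigma> x) * indicator {a..a+1} x \<partial>lborel)"
    by (rule emeasure_density) auto
  also have "\<dots> \<ge> (\<integral>\<^sup>+ x. ennreal ?c * indicator {a..a+1} x \<partial>lborel)"
    by (rule nn_integral_mono) (rule le)
  finally have "ennreal ?c * emeasure lborel {a..a+1} \<le> emeasure (density lborel (normal_density 0 \<sigma>)) {a..a+1}"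
    by (simp add: nn_integral_cmult_indicator)
  moreover have "0 < ennreal ?c * emeasure lborel {a..a+1}" using c by simp
  ultimately show ?thesis by (rule less_le_trans[rotated])
qed

lemma ennreal_prod_pos: "(\<And>i. i \<in> A \<Longrightarrow> (0::ennreal) < f i) \<Longrightarrow> 0 < prod f A"
  by (induction A rule: infinite_finite_induct) (auto simp: ennreal_zero_less_mult_iff)

lemma Aev_pos:
  assumes \<sigma>: "\<sigma> > 0" and a: "0 \<le> a"
  shows "0 < measure (gauss_entries N \<sigma>) (Aev N a)"
proof -
  interpret prob_space "gauss_entries N \<sigma>" by (rule prob_space_gauss[OF \<sigma>])
  let ?G = "density lborel (normal_density 0 \<sigma>)"
  have "emeasure (gauss_entries N \<sigma>) (Aev N a)
     = emeasure (PiM (upper_idx N) (\<lambda>_. ?G)) (prod_emb (upper_idx N) (\<lambda>_. ?G) (upper_idx N) (PiE (upper_idx N) (\<lambda>_. {a..a+1})))"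
    unfolding gauss_entries_def Aev_def by (subst prod_emb_PiE_same_index) auto
  also have "\<dots> = (\<Prod>i\<in>upper_idx N. emeasure ?G {a..a+1})"
    by (rule emeasure_PiM_emb) (auto simp: finite_upper_idx prob_space_normal_density[OF \<sigma>])
  finally have "0 < emeasure (gauss_entries N \<sigma>) (Aev N a)"
    using ennreal_prod_pos[of "upper_idx N" "\<lambda>_. emeasure ?G {a..a+1}"] normal_interval_pos[OF \<sigma> a]
    by simp
  then show ?thesis by (simp add: emeasure_eq_measure)
qed

lemma Bent_lower:
  assumes \<sigma>: "\<sigma> > 0" and a: "0 \<le> a" and N: "1 \<le> N"
  shows "measure (gauss_entries N \<sigma>) (Aev N a) * (a * N) ^ (2 * k) \<le> Bent N \<sigma> k k"
proof -
  interpret prob_space "gauss_entries N \<sigma>" by (rule prob_space_gauss[OF \<sigma>])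
  let ?M = "gauss_entries N \<sigma>"
  have ptw: "(a * N) ^ (2 * k) * indicator (Aev N a) x \<le> Sf x N k k" for x
  proof (cases "x \<in> Aev N a")
    case True then show ?thesis using Sf_lower[OF Aev_W[OF True] a N] by simp
  qed (simp add: Sf_nonneg)
  have int: "integrable ?M (\<lambda>x. (a * N) ^ (2 * k) * indicator (Aev N a) x)"
    using Aev_sets emeasure_finite[of "Aev N a"]
    by (intro integrable_mult_right integrable_real_indicator) (auto simp: less_top[symmetric])
  have "(\<integral>x. (a * N) ^ (2 * k) * indicator (Aev N a) x \<partial>?M) \<le> (\<integral>x. Sf x N k k \<partial>?M)"
    by (rule integral_mono[OF int integrable_Sf[OF \<sigma>]]) (rule ptw)
  moreover have "(\<integral>x. (a * N) ^ (2 * k) * indicator (Aev N a) x \<partial>?M) = (a * N) ^ (2 * k) * measure ?M (Aev N a)"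
  proof -
    have "Aev N a \<inter> space ?M = Aev N a" using sets.sets_into_space[OF Aev_sets[of N a \<sigma>]] by blast
    then show ?thesis by simp
  qed
  ultimately have "(a * N) ^ (2 * k) * measure ?M (Aev N a) \<le> (\<integral>x. Sf x N k k \<partial>?M)" by linarith
  then show ?thesis unfolding Bent_Sf by (simp only: mult.commute)
qed

lemma Bent_grow:
  assumes \<sigma>: "\<sigma> > 0" and N: "1 \<le> N" and C: "0 < C"
  shows "\<exists>c>0. \<forall>k. c * C ^ k \<le> Bent N \<sigma> k k"
proof -
  define a where "a = C + 1"
  have a: "0 \<le> a" "1 \<le> a" using C by (auto simp: a_def)
  have "C \<le> a * a" using C a by (simp add: a_def algebra_simps)
  also have "a * a \<le> (a * N) * (a * N)" using a N
    by (intro mult_mono) (auto simp: mult_le_cancel_left1)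
  finally have CaN: "C \<le> (a * N)^2" by (simp add: power2_eq_square)
  let ?c = "measure (gauss_entries N \<sigma>) (Aev N a)"
  have "?c * C ^ k \<le> Bent N \<sigma> k k" for k
  proof -
    have "C ^ k \<le> ((a * N)^2) ^ k" using C CaN by (intro power_mono) auto
    then have "?c * C ^ k \<le> ?c * (a * N) ^ (2 * k)"
      using Aev_pos[OF \<sigma> a(1)] by (simp add: power_mult)
    also have "\<dots> \<le> Bent N \<sigma> k k" by (rule Bent_lower[OF \<sigma> a(1) N])
    finally show ?thesis .
  qed
  then show ?thesis using Aev_pos[OF \<sigma> a(1)] by blast
qed

lemma Bent_logconv_aux:
  assumes \<sigma>: "\<sigma> > 0" and t: "0 < t"
  shows "Bent N \<sigma> (Suc k) (Suc k) \<le> (t * Bent N \<sigma> k k + Bent N \<sigma> (Suc (Suc k)) (Suc (Suc k)) / t) / 2"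
proof -
  let ?M = "gauss_entries N \<sigma>"
  have ptw: "Sf x N k (Suc (Suc k)) \<le> (t * Sf x N k k + Sf x N (Suc (Suc k)) (Suc (Suc k)) / t) / 2" for x
  proof -
    have "u * v \<le> (t * (u * u) + v * v / t) / 2" for u v :: real
    proof -
      have "0 \<le> (t * u - v)^2 / t" using t by simp
      also have "(t * u - v)^2 / t = t * (u * u) + v * v / t - 2 * (u * v)"
        using t by (simp add: power2_eq_square field_simps)
      finally show ?thesis by simp
    qed
    then have "Sf x N k (Suc (Suc k)) \<le> (\<Sum>i<N. (t * (bp x N k i * bp x N k i) + bp x N (Suc (Suc k)) i * bp x N (Suc (Suc k)) i / t) / 2)"
      unfolding Sf_def by (intro sum_mono) auto
    also have "\<dots> = (t * Sf x N k k + Sf x N (Suc (Suc k)) (Suc (Suc k)) / t) / 2"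
    proof -
      have gen: "(\<Sum>i<N. (t * f i + g i / t) / 2) = (t * (\<Sum>i<N. f i) + (\<Sum>i<N. g i) / t) / 2"
        for f g :: "nat \<Rightarrow> real"
      proof -
        have "(\<Sum>i<N. (t * f i + g i / t) / 2) = (\<Sum>i<N. t * f i + g i / t) / 2"
          by (simp only: sum_divide_distrib)
        also have "(\<Sum>i<N. t * f i + g i / t) = t * (\<Sum>i<N. f i) + (\<Sum>i<N. g i) / t"
          by (simp only: sum.distrib sum_distrib_left sum_divide_distrib)
        finally show ?thesis .
      qed
      show ?thesis unfolding Sf_def by (rule gen)
    qed
    finally show ?thesis .
  qed
  have "Bent N \<sigma> (Suc k) (Suc k) = Bent N \<sigma> k (Suc (Suc k))" by (rule Bent_eq) simp
  also have "\<dots> = (\<integral>x. Sf x N k (Suc (Suc k)) \<partial>?M)" by (rule Bent_Sf)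
  also have "\<dots> \<le> (\<integral>x. (t * Sf x N k k + Sf x N (Suc (Suc k)) (Suc (Suc k)) / t) / 2 \<partial>?M)"
  proof (rule integral_mono)
    show "integrable ?M (\<lambda>x. (t * Sf x N k k + Sf x N (Suc (Suc k)) (Suc (Suc k)) / t) / 2)"
      using integrable_Sf[OF \<sigma>] by simp
  qed (rule integrable_Sf[OF \<sigma>], rule ptw)
  also have "\<dots> = (t * Bent N \<sigma> k k + Bent N \<sigma> (Suc (Suc k)) (Suc (Suc k)) / t) / 2"
    unfolding Bent_Sf using integrable_Sf[OF \<sigma>] by simp
  finally show ?thesis .
qed


lemma ratio_tail:
  fixes u :: "nat \<Rightarrow> real"
  assumes pos: "\<And>k. 0 < u k"
    and lc: "\<And>k. u (Suc k) ^ 2 \<le> u k * u (Suc (Suc k))"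
    and grow: "\<And>C. 0 < C \<Longrightarrow> \<exists>c>0. \<forall>k. c * C ^ k \<le> u k"
  shows "(\<lambda>T. (\<Sum>l<T. u l) / u T) \<longlonglongrightarrow> 0"
proof -
  define r where "r k = u (Suc k) / u k" for k
  have rpos: "0 < r k" for k using pos unfolding r_def by simp
  have rmono: "r k \<le> r (Suc k)" for k
  proof -
    have "u (Suc k) * u (Suc k) \<le> u k * u (Suc (Suc k))" using lc[of k] by (simp add: power2_eq_square)
    then show ?thesis unfolding r_def using pos[of k] pos[of "Suc k"]
      by (simp add: divide_simps mult.commute)
  qed
  have inc: "incseq r" by (rule incseq_SucI) (rule rmono)
  have unb: "\<exists>k. R < r k" for R
  proof (rule ccontr)
    assume "\<not> ?thesis"
    then have le: "r k \<le> R" for k by (simp add: not_less)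
    have R: "0 < R" using le[of 0] rpos[of 0] by simp
    have ub: "u k \<le> u 0 * R ^ k" for k
    proof (induction k)
      case 0 then show ?case by simp
    next
      case (Suc k)
      have "u (Suc k) = r k * u k" unfolding r_def using pos[of k] by simp
      also have "\<dots> \<le> R * (u 0 * R ^ k)" using le[of k] Suc.IH pos[of k] rpos[of k] R
        by (intro mult_mono) auto
      finally show ?case by (simp add: algebra_simps)
    qed
    obtain c where c: "0 < c" "\<And>k. c * (2 * R) ^ k \<le> u k" using grow[of "2 * R"] R by auto
    obtain k where k: "u 0 / c < 2 ^ k" using real_arch_pow[of 2 "u 0 / c"] by auto
    have "c * (2 * R) ^ k \<le> u 0 * R ^ k" using c(2)[of k] ub[of k] by simp
    then have "c * 2 ^ k * R ^ k \<le> u 0 * R ^ k" by (simp add: power_mult_distrib mult.assoc)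
    then have "c * 2 ^ k \<le> u 0" using R by simp
    then show False using k c(1) by (simp add: divide_simps mult.commute)
  qed
  have ev: "eventually (\<lambda>k. R \<le> r k) sequentially" for R
  proof -
    obtain k0 where "R < r k0" using unb by blast
    then show ?thesis unfolding eventually_sequentially
      using inc by (metis incseq_def less_le_trans order.strict_implies_order)
  qed
  have rtop: "filterlim r at_top sequentially"
    unfolding filterlim_at_top using ev by blast
  define q where "q T = (\<Sum>l<T. u l) / u T" for T
  have qnn: "0 \<le> q T" for T unfolding q_def using pos by (intro divide_nonneg_pos sum_nonneg) (auto intro: less_imp_le)
  have qrec: "q (Suc T) = (q T + 1) / r T" for T
    unfolding q_def r_def using pos[of T] pos[of "Suc T"] by (simp add: field_simps)
  obtain k0 where k0: "\<And>k. k \<ge> k0 \<Longrightarrow> 2 \<le> r k" using ev[of 2] unfolding eventually_sequentially by blast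
  define Q where "Q = max (q k0) 1"
  have qb: "q T \<le> Q" if "T \<ge> k0" for T
    using that
  proof (induction T rule: dec_induct)
    case base then show ?case by (simp add: Q_def)
  next
    case (step T)
    have "q (Suc T) = (q T + 1) / r T" by (rule qrec)
    also have "\<dots> \<le> (q T + 1) / 2" using k0[OF step.hyps(1)] qnn[of T]
      by (intro divide_left_mono) auto
    also have "\<dots> \<le> Q" using step.IH by (simp add: Q_def)
    finally show ?case .
  qed
  have lim: "(\<lambda>T. (Q + 1) / r T) \<longlonglongrightarrow> 0"
    by (rule tendsto_divide_0[OF tendsto_const]) (rule filterlim_at_top_imp_at_infinity[OF rtop])
  have "(\<lambda>T. q (Suc T)) \<longlonglongrightarrow> 0"
  proof (rule tendsto_sandwich[OF _ _ tendsto_const lim])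
    show "eventually (\<lambda>T. 0 \<le> q (Suc T)) sequentially" using qnn by simp
    show "eventually (\<lambda>T. q (Suc T) \<le> (Q + 1) / r T) sequentially"
      unfolding eventually_sequentially
    proof (intro exI allI impI)
      fix T assume "T \<ge> k0"
      then show "q (Suc T) \<le> (Q + 1) / r T" unfolding qrec using qb[of T] rpos[of T]
        by (intro divide_right_mono) auto
    qed
  qed
  then have "q \<longlonglongrightarrow> 0" by (rule LIMSEQ_imp_Suc)
  then show ?thesis unfolding q_def .
qed


definition mtr :: "'a::comm_ring_1 mat \<Rightarrow> 'a" where
  "mtr A = (\<Sum>i<dim_row A. A $$ (i, i))"

lemma mult_entry:
  assumes "A \<in> carrier_mat n m" "B \<in> carrier_mat m k" "i < n" "j < k"
  shows "(A * B) $$ (i, j) = (\<Sum>l<m. A $$ (i, l) * B $$ (l, j))"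
  using assms by (simp add: scalar_prod_def atLeast0LessThan)

lemma mult_vec_entry:
  assumes "A \<in> carrier_mat n m" "v \<in> carrier_vec m" "i < n"
  shows "(A *\<^sub>v v) $ i = (\<Sum>l<m. A $$ (i, l) * v $ l)"
  using assms by (simp add: scalar_prod_def atLeast0LessThan)

lemma mtr_comm:
  fixes A B :: "'a::comm_ring_1 mat"
  assumes A: "A \<in> carrier_mat n m" and B: "B \<in> carrier_mat m n"
  shows "mtr (A * B) = mtr (B * A)"
proof -
  have "mtr (A * B) = (\<Sum>i<n. (A * B) $$ (i, i))" unfolding mtr_def using A by simp
  also have "\<dots> = (\<Sum>i<n. \<Sum>l<m. A $$ (i, l) * B $$ (l, i))"
    by (rule sum.cong[OF refl]) (rule mult_entry[OF A B], auto)
  also have "\<dots> = (\<Sum>l<m. \<Sum>i<n. B $$ (l, i) * A $$ (i, l))"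
    by (subst sum.swap) (simp add: mult.commute)
  also have "\<dots> = (\<Sum>l<m. (B * A) $$ (l, l))"
    by (rule sum.cong[OF refl]) (rule mult_entry[OF B A, symmetric], auto)
  also have "\<dots> = mtr (B * A)" unfolding mtr_def using B by simp
  finally show ?thesis .
qed

lemma mtr_similar:
  fixes A B P Q :: "'a::comm_ring_1 mat"
  assumes "similar_mat_wit A B P Q" "A \<in> carrier_mat n n"
  shows "mtr A = mtr B"
proof -
  from assms have B: "B \<in> carrier_mat n n" and P: "P \<in> carrier_mat n n" and Q: "Q \<in> carrier_mat n n"
    and QP: "Q * P = 1\<^sub>m n" and AE: "A = P * B * Q"
    unfolding similar_mat_wit_def Let_def by auto
  have "mtr A = mtr ((P * B) * Q)" using AE by simp
  also have "\<dots> = mtr (Q * (P * B))" by (rule mtr_comm[of _ n n]) (use P B Q in auto)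
  also have "Q * (P * B) = (Q * P) * B" using P B Q by simp
  also have "\<dots> = B" using QP B by simp
  finally show ?thesis .
qed

lemma similar_sq:
  fixes A B P Q :: "'a::comm_ring_1 mat"
  assumes "similar_mat_wit A B P Q" "A \<in> carrier_mat n n"
  shows "similar_mat_wit (A * A) (B * B) P Q"
proof -
  from assms have B: "B \<in> carrier_mat n n" and P: "P \<in> carrier_mat n n" and Q: "Q \<in> carrier_mat n n"
    and QP: "Q * P = 1\<^sub>m n" and PQ: "P * Q = 1\<^sub>m n" and AE: "A = P * B * Q"
    unfolding similar_mat_wit_def Let_def by auto
  have "A * A = P * B * (Q * P) * B * Q" using AE P B Q by (simp add: assoc_mult_mat[of _ n n _ n _ n])
  also have "\<dots> = P * (B * B) * Q" using QP P B Q by (simp add: assoc_mult_mat[of _ n n _ n _ n])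
  finally show ?thesis unfolding similar_mat_wit_def Let_def using P Q B QP PQ assms(2) by auto
qed

lemma upper_sq_diag:
  fixes B :: "'a::comm_ring_1 mat"
  assumes B: "B \<in> carrier_mat n n" and ut: "upper_triangular B" and i: "i < n"
  shows "(B * B) $$ (i, i) = B $$ (i, i) * B $$ (i, i)"
proof -
  have "(B * B) $$ (i, i) = (\<Sum>l<n. B $$ (i, l) * B $$ (l, i))" by (rule mult_entry[OF B B i i])
  also have "\<dots> = B $$ (i, i) * B $$ (i, i) + (\<Sum>l\<in>{..<n}-{i}. B $$ (i, l) * B $$ (l, i))"
    using i by (simp add: sum.remove)
  also have "(\<Sum>l\<in>{..<n}-{i}. B $$ (i, l) * B $$ (l, i)) = 0"
  proof (rule sum.neutral, intro ballI)
    fix l assume l: "l \<in> {..<n}-{i}"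
    show "B $$ (i, l) * B $$ (l, i) = 0"
    proof (cases "l < i")
      case True then show ?thesis using ut i B unfolding upper_triangular_def by auto
    next
      case False then have "i < l" using l by auto
      then show ?thesis using ut l B unfolding upper_triangular_def by auto
    qed
  qed
  finally show ?thesis by simp
qed

lemma charpoly_roots_eig:
  fixes A :: "real mat"
  assumes A: "A \<in> carrier_mat n n" and cp: "char_poly A = (\<Prod>e\<leftarrow>es. [:- e, 1:])"
  shows "{k. eigenvalue A k} = set es"
proof -
  have "eigenvalue A k \<longleftrightarrow> k \<in> set es" for k
    unfolding eigenvalue_root_char_poly[OF A] cp poly_prod_list
    by (auto simp: prod_list_zero_iff o_def image_iff)
  then show ?thesis by auto
qed

lemma order_linear_prod:
  fixes es :: "real list"
  shows "Polynomial.order k (\<Prod>e\<leftarrow>es. [:- e, 1:]) = count_list es k"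
proof (induction es)
  case Nil then show ?case by simp
next
  case (Cons e es)
  have nz: "(\<Prod>e\<leftarrow>es. [:- e, 1:]) \<noteq> 0" by (auto simp: prod_list_zero_iff image_iff)
  have "Polynomial.order k ([:- e, 1:] * (\<Prod>e\<leftarrow>es. [:- e, 1:])) = Polynomial.order k [:- e, 1:] + Polynomial.order k (\<Prod>e\<leftarrow>es. [:- e, 1:])"
  proof (rule order_mult)
    show "[:- e, 1:] * (\<Prod>e\<leftarrow>es. [:- e, 1:]) \<noteq> 0" using nz by (simp only: mult_eq_0_iff) simp
  qed
  moreover have "Polynomial.order k [:- e, 1:] = (if k = e then 1 else 0)"
  proof (cases "k = e")
    case True then show ?thesis using order_power_n_n[of k 1] by simp
  next
    case False
    have "Polynomial.order k [:- e, 1:] = 0" by (rule order_0I) (use False in simp)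
    then show ?thesis using False by simp
  qed
  ultimately show ?case using Cons.IH by simp
qed

lemma sum_list_count: "sum_list (xs :: real list) = (\<Sum>k\<in>set xs. of_nat (count_list xs k) * k)"
proof (induction xs)
  case Nil then show ?case by simp
next
  case (Cons x xs)
  have 1: "(\<Sum>k\<in>insert x (set xs). of_nat (count_list xs k) * k) = (\<Sum>k\<in>set xs. of_nat (count_list xs k) * k)"
    by (cases "x \<in> set xs") (auto simp: insert_absorb count_list_0_iff)
  have 2: "(\<Sum>k\<in>insert x (set xs). if x = k then k else 0) = x"
    by (simp add: sum.delta)
  have "(\<Sum>k\<in>set (x # xs). of_nat (count_list (x # xs) k) * k)
      = (\<Sum>k\<in>insert x (set xs). of_nat (count_list xs k) * k + (if x = k then k else 0))"
    by (intro sum.cong) (auto simp: algebra_simps)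
  also have "\<dots> = x + sum_list xs" unfolding sum.distrib 1 2 Cons.IH by simp
  finally show ?case by simp
qed

lemma eig_sum_list:
  fixes A :: "real mat"
  assumes A: "A \<in> carrier_mat n n" and cp: "char_poly A = (\<Prod>e\<leftarrow>es. [:- e, 1:])"
  shows "eig_sum A = sum_list es"
proof -
  have "eig_sum A = (\<Sum>k\<in>set es. of_nat (count_list es k) * k)"
    unfolding eig_sum_def charpoly_roots_eig[OF A cp] cp order_linear_prod ..
  also have "\<dots> = sum_list es" by (rule sum_list_count[symmetric])
  finally show ?thesis .
qed

lemma schur_traces:
  fixes A :: "real mat"
  assumes A: "A \<in> carrier_mat n n" and cp: "char_poly A = (\<Prod>e\<leftarrow>es. [:- e, 1:])"
  shows "sum_list es = mtr A" "sum_list (map (\<lambda>e. e * e) es) = mtr (A * A)"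
proof -
  obtain B P Q where sd: "schur_decomposition A es = (B, P, Q)" by (cases "schur_decomposition A es") auto
  from schur_decomposition[OF A cp sd] have sim: "similar_mat_wit A B P Q" and ut: "upper_triangular B"
    and dg: "diag_mat B = es" by auto
  have B: "B \<in> carrier_mat n n" using sim A unfolding similar_mat_wit_def Let_def by auto
  have es: "es = map (\<lambda>i. B $$ (i, i)) [0..<n]" using dg B unfolding diag_mat_def by auto
  have "sum_list es = mtr B"
    unfolding es mtr_def using B
    by (simp add: interv_sum_list_conv_sum_set_nat atLeast0LessThan)
  then show "sum_list es = mtr A" using mtr_similar[OF sim A] by simp
  have "sum_list (map (\<lambda>e. e * e) es) = (\<Sum>i<n. B $$ (i, i) * B $$ (i, i))"
    unfolding es by (simp add: interv_sum_list_conv_sum_set_nat atLeast0LessThan o_def)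
  also have "\<dots> = mtr (B * B)" unfolding mtr_def using B upper_sq_diag[OF B ut] by simp
  also have "\<dots> = mtr (A * A)"
    using mtr_similar[OF similar_sq[OF sim A], of n] A by simp
  finally show "sum_list (map (\<lambda>e. e * e) es) = mtr (A * A)" .
qed


lemma sym_eig_real:
  fixes A :: "real mat"
  assumes A: "A \<in> carrier_mat n n" and sym: "\<And>i j. i < n \<Longrightarrow> j < n \<Longrightarrow> A $$ (i, j) = A $$ (j, i)"
    and ev: "eigenvalue (map_mat complex_of_real A) a"
  shows "a = complex_of_real (Re a)"
proof -
  let ?C = "map_mat complex_of_real A"
  have C: "?C \<in> carrier_mat n n" using A by simp
  obtain v where v: "eigenvector ?C v a" using ev unfolding eigenvalue_def by blast
  have vc: "v \<in> carrier_vec n" and v0: "v \<noteq> 0\<^sub>v n" and Cv: "?C *\<^sub>v v = a \<cdot>\<^sub>v v"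
    using v C unfolding eigenvector_def by auto
  have Cv_i: "(\<Sum>j<n. complex_of_real (A $$ (i, j)) * v $ j) = a * v $ i" if i: "i < n" for i
  proof -
    have "(?C *\<^sub>v v) $ i = (\<Sum>j<n. ?C $$ (i, j) * v $ j)" by (rule mult_vec_entry[OF C vc i])
    also have "\<dots> = (\<Sum>j<n. complex_of_real (A $$ (i, j)) * v $ j)"
      by (rule sum.cong[OF refl]) (use A i in auto)
    finally show ?thesis using Cv i vc by simp
  qed
  define s where "s = (\<Sum>i<n. \<Sum>j<n. cnj (v $ i) * complex_of_real (A $$ (i, j)) * v $ j)"
  define r where "r = (\<Sum>i<n. (cmod (v $ i))^2)"
  have s1: "s = a * complex_of_real r"
  proof -
    have "s = (\<Sum>i<n. cnj (v $ i) * (\<Sum>j<n. complex_of_real (A $$ (i, j)) * v $ j))"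
      unfolding s_def by (simp add: sum_distrib_left mult.assoc)
    also have "\<dots> = (\<Sum>i<n. a * (v $ i * cnj (v $ i)))"
    proof (rule sum.cong[OF refl])
      fix i assume "i \<in> {..<n}"
      then have i: "i < n" by simp
      show "cnj (v $ i) * (\<Sum>j<n. complex_of_real (A $$ (i, j)) * v $ j) = a * (v $ i * cnj (v $ i))"
        by (simp only: Cv_i[OF i]) (simp add: mult_ac)
    qed
    also have "\<dots> = a * complex_of_real r"
    proof -
      have h: "z * cnj z = (complex_of_real (cmod z))^2" for z
        by (metis complex_norm_square of_real_power)
      show ?thesis unfolding r_def by (simp add: sum_distrib_left h of_real_sum)
    qed
    finally show ?thesis .
  qed
  have s2: "cnj s = s"
  proof -
    have "cnj s = (\<Sum>i<n. \<Sum>j<n. v $ i * complex_of_real (A $$ (i, j)) * cnj (v $ j))"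
      unfolding s_def by (simp add: cnj_sum)
    also have "\<dots> = (\<Sum>j<n. \<Sum>i<n. v $ i * complex_of_real (A $$ (i, j)) * cnj (v $ j))"
      by (rule sum.swap)
    also have "\<dots> = s" unfolding s_def
      by (intro sum.cong refl) (simp add: sym mult_ac)
    finally show ?thesis .
  qed
  have rpos: "r > 0"
  proof -
    obtain i where i: "i < n" "v $ i \<noteq> 0" using v0 vc by (metis eq_vecI carrier_vecD index_zero_vec)
    have "(cmod (v $ i))^2 \<le> r" unfolding r_def using i by (intro member_le_sum) auto
    moreover have "0 < (cmod (v $ i))^2" using i by simp
    ultimately show ?thesis by linarith
  qed
  have "cnj a * complex_of_real r = a * complex_of_real r" using s1 s2 by (metis complex_cnj_mult complex_cnj_complex_of_real)
  then have "cnj a = a" using rpos by simp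
  then show ?thesis by (metis Reals_cnj_iff complex_is_Real_iff of_real_Re)
qed

lemma sym_char_poly_split:
  fixes A :: "real mat"
  assumes A: "A \<in> carrier_mat n n" and sym: "\<And>i j. i < n \<Longrightarrow> j < n \<Longrightarrow> A $$ (i, j) = A $$ (j, i)"
  shows "\<exists>es. char_poly A = (\<Prod>e\<leftarrow>es. [:- e, 1:]) \<and> length es = n"
proof -
  interpret mp: map_poly_comm_ring_hom "complex_of_real" ..
  let ?C = "map_mat complex_of_real A"
  have C: "?C \<in> carrier_mat n n" using A by simp
  obtain as where cp: "char_poly ?C = (\<Prod>a\<leftarrow>as. [:- a, 1:])" and len: "length as = n"
    using char_poly_factorized[OF C] by blast
  have real: "a = complex_of_real (Re a)" if a: "a \<in> set as" for a
  proof (rule sym_eig_real[OF A sym])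
    show "eigenvalue ?C a" unfolding eigenvalue_root_char_poly[OF C] cp poly_prod_list
      using a by (auto simp: prod_list_zero_iff o_def image_iff)
  qed
  define es where "es = map Re as"
  have mp: "map_poly complex_of_real (\<Prod>e\<leftarrow>es. [:- e, 1:]) = (\<Prod>a\<leftarrow>as. [:- a, 1:])"
    using real unfolding es_def
  proof (induction as)
    case Nil then show ?case by simp
  next
    case (Cons a as)
    have "map_poly complex_of_real (\<Prod>e\<leftarrow>map Re (a # as). [:- e, 1:])
       = map_poly complex_of_real [:- Re a, 1:] * map_poly complex_of_real (\<Prod>e\<leftarrow>map Re as. [:- e, 1:])"
      by (simp only: list.map prod_list.Cons mp.hom_mult)
    also have "map_poly complex_of_real [:- Re a, 1:] = [:- a, 1:]"
      using Cons.prems[of a] by (simp add: map_poly_pCons)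
    also have "map_poly complex_of_real (\<Prod>e\<leftarrow>map Re as. [:- e, 1:]) = (\<Prod>a\<leftarrow>as. [:- a, 1:])"
      using Cons by simp
    finally show ?case by simp
  qed
  have "map_poly complex_of_real (char_poly A) = map_poly complex_of_real (\<Prod>e\<leftarrow>es. [:- e, 1:])"
    unfolding mp cp[symmetric] by (rule of_real_hom.char_poly_hom[OF A, symmetric])
  then have "char_poly A = (\<Prod>e\<leftarrow>es. [:- e, 1:])"
  proof (intro poly_eqI)
    fix i
    assume h: "map_poly complex_of_real (char_poly A) = map_poly complex_of_real (\<Prod>e\<leftarrow>es. [:- e, 1:])"
    have "coeff (map_poly complex_of_real (char_poly A)) i = coeff (map_poly complex_of_real (\<Prod>e\<leftarrow>es. [:- e, 1:])) i"
      using h by (rule arg_cong)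
    then show "coeff (char_poly A) i = coeff (\<Prod>e\<leftarrow>es. [:- e, 1:]) i"
      by (simp only: coeff_map_poly of_real_0 of_real_eq_iff)
  qed
  moreover have "length es = n" using len unfolding es_def by simp
  ultimately show ?thesis by blast
qed


declare sum.lessThan_Suc[simp del] prod.lessThan_Suc[simp del]

lemma psd_bounds:
  fixes A :: "real mat"
  assumes A: "A \<in> carrier_mat n n" and n: "0 < n"
    and sym: "\<And>i j. i < n \<Longrightarrow> j < n \<Longrightarrow> A $$ (i, j) = A $$ (j, i)"
    and psd: "\<And>v. v \<in> carrier_vec n \<Longrightarrow> 0 \<le> v \<bullet> (A *\<^sub>v v)"
  shows "lambda_max A \<le> eig_sum A" "eig_sum A = mtr A"
    "A $$ (n - 1, n - 1) * A $$ (n - 1, n - 1) \<le> lambda_max A * eig_sum A"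
proof -
  obtain es where cp: "char_poly A = (\<Prod>e\<leftarrow>es. [:- e, 1:])" and len: "length es = n"
    using sym_char_poly_split[OF A sym] by blast
  have es_ne: "set es \<noteq> {}" using len n by auto
  have lm: "lambda_max A = Max (set es)" unfolding lambda_max_def charpoly_roots_eig[OF A cp] ..
  have es_sum: "eig_sum A = sum_list es" by (rule eig_sum_list[OF A cp])
  have nonneg: "0 \<le> e" if e: "e \<in> set es" for e
  proof -
    have "eigenvalue A e" using e charpoly_roots_eig[OF A cp] by auto
    then obtain v where v: "eigenvector A v e" unfolding eigenvalue_def by blast
    have vc: "v \<in> carrier_vec n" and v0: "v \<noteq> 0\<^sub>v n" and Av: "A *\<^sub>v v = e \<cdot>\<^sub>v v"
      using v A unfolding eigenvector_def by auto
    have "v \<bullet> (A *\<^sub>v v) = e * (v \<bullet> v)" unfolding Av using vc by simp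
    moreover have "0 < v \<bullet> v"
    proof -
      obtain i where i: "i < n" "v $ i \<noteq> 0" using v0 vc by (metis eq_vecI carrier_vecD index_zero_vec)
      have "v \<bullet> v = (\<Sum>j<n. v $ j * v $ j)" using vc by (simp add: scalar_prod_def atLeast0LessThan)
      moreover have "v $ i * v $ i \<le> (\<Sum>j<n. v $ j * v $ j)" using i by (intro member_le_sum) auto
      moreover have "0 < v $ i * v $ i" using i(2) not_real_square_gt_zero by blast
      ultimately show ?thesis by linarith
    qed
    ultimately show ?thesis using psd[OF vc] by (simp add: zero_le_mult_iff)
  qed
  have Mmem: "Max (set es) \<in> set es" using es_ne by simp
  show "lambda_max A \<le> eig_sum A" unfolding lm es_sum
    using Mmem nonneg by (intro member_le_sum_list) auto
  show tr: "eig_sum A = mtr A" unfolding es_sum by (rule schur_traces(1)[OF A cp])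
  have "A $$ (n - 1, n - 1) * A $$ (n - 1, n - 1) \<le> (\<Sum>i<n. \<Sum>k<n. A $$ (i, k) * A $$ (k, i))"
  proof -
    have "A $$ (n - 1, n - 1) * A $$ (n - 1, n - 1) \<le> (\<Sum>k<n. A $$ (n - 1, k) * A $$ (k, n - 1))"
      using n sym by (intro member_le_sum[where f="\<lambda>k. A $$ (n - 1, k) * A $$ (k, n - 1)"]) auto
    also have "\<dots> \<le> (\<Sum>i<n. \<Sum>k<n. A $$ (i, k) * A $$ (k, i))"
      using n sym by (intro member_le_sum[where f="\<lambda>i. \<Sum>k<n. A $$ (i, k) * A $$ (k, i)"] sum_nonneg) auto
    finally show ?thesis .
  qed
  also have "\<dots> = mtr (A * A)"
  proof -
    have "mtr (A * A) = (\<Sum>i<n. (A * A) $$ (i, i))" unfolding mtr_def using A by simp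
    also have "\<dots> = (\<Sum>i<n. \<Sum>k<n. A $$ (i, k) * A $$ (k, i))"
      by (rule sum.cong[OF refl]) (rule mult_entry[OF A A], auto)
    finally show ?thesis by simp
  qed
  also have "\<dots> = sum_list (map (\<lambda>e. e * e) es)" by (rule schur_traces(2)[OF A cp, symmetric])
  also have "\<dots> \<le> sum_list (map (\<lambda>e. Max (set es) * e) es)"
    using nonneg by (intro sum_list_mono mult_right_mono) auto
  also have "\<dots> = Max (set es) * sum_list es" by (simp add: sum_list_const_mult)
  finally show "A $$ (n - 1, n - 1) * A $$ (n - 1, n - 1) \<le> lambda_max A * eig_sum A"
    unfolding lm es_sum .
qed

lemma Bmat_carrier: "Bmat T N \<sigma> \<in> carrier_mat (Suc T) (Suc T)"
  unfolding Bmat_def by simp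

lemma Bmat_entry: "i < Suc T \<Longrightarrow> j < Suc T \<Longrightarrow> Bmat T N \<sigma> $$ (i, j) = Bent N \<sigma> i j"
  unfolding Bmat_def by simp

lemma Bmat_psd:
  assumes \<sigma>: "\<sigma> > 0" and v: "v \<in> carrier_vec (Suc T)"
  shows "0 \<le> v \<bullet> (Bmat T N \<sigma> *\<^sub>v v)"
proof -
  let ?n = "Suc T" and ?M = "gauss_entries N \<sigma>"
  have "v \<bullet> (Bmat T N \<sigma> *\<^sub>v v) = (\<Sum>i<?n. v $ i * (Bmat T N \<sigma> *\<^sub>v v) $ i)"
  proof -
    have "dim_vec (Bmat T N \<sigma> *\<^sub>v v) = ?n" using Bmat_carrier[of T N \<sigma>] by simp
    then show ?thesis by (simp only: scalar_prod_def atLeast0LessThan)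
  qed
  also have "\<dots> = (\<Sum>i<?n. \<Sum>j<?n. (v $ i * v $ j) * Bent N \<sigma> i j)"
  proof (rule sum.cong[OF refl])
    fix i assume "i \<in> {..<?n}" then have i: "i < ?n" by simp
    have "(Bmat T N \<sigma> *\<^sub>v v) $ i = (\<Sum>j<?n. Bmat T N \<sigma> $$ (i, j) * v $ j)"
      by (rule mult_vec_entry[OF Bmat_carrier v i])
    also have "\<dots> = (\<Sum>j<?n. Bent N \<sigma> i j * v $ j)"
      by (rule sum.cong[OF refl]) (use i in \<open>simp add: Bmat_entry\<close>)
    finally have h: "(Bmat T N \<sigma> *\<^sub>v v) $ i = (\<Sum>j<?n. Bent N \<sigma> i j * v $ j)" .
    show "v $ i * (Bmat T N \<sigma> *\<^sub>v v) $ i = (\<Sum>j<?n. (v $ i * v $ j) * Bent N \<sigma> i j)"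
      unfolding h sum_distrib_left by (rule sum.cong[OF refl]) (simp add: mult_ac)
  qed
  also have "\<dots> = (\<integral>x. (\<Sum>i<?n. \<Sum>j<?n. (v $ i * v $ j) * Sf x N i j) \<partial>?M)"
  proof -
    have "(\<integral>x. (\<Sum>i<?n. \<Sum>j<?n. (v $ i * v $ j) * Sf x N i j) \<partial>?M)
        = (\<Sum>i<?n. (\<integral>x. (\<Sum>j<?n. (v $ i * v $ j) * Sf x N i j) \<partial>?M))"
      by (rule Bochner_Integration.integral_sum[where f="\<lambda>i x. \<Sum>j<?n. (v $ i * v $ j) * Sf x N i j"])
        (auto intro!: Bochner_Integration.integrable_sum Bochner_Integration.integrable_mult_right integrable_Sf[OF \<sigma>])
    also have "\<dots> = (\<Sum>i<?n. \<Sum>j<?n. (\<integral>x. (v $ i * v $ j) * Sf x N i j \<partial>?M))"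
      by (rule sum.cong[OF refl], rule Bochner_Integration.integral_sum[where f="\<lambda>j x. (v $ i * v $ j) * Sf x N i j" for i])
        (auto intro!: Bochner_Integration.integrable_mult_right integrable_Sf[OF \<sigma>])
    also have "\<dots> = (\<Sum>i<?n. \<Sum>j<?n. (v $ i * v $ j) * Bent N \<sigma> i j)"
      unfolding Bent_Sf by simp
    finally show ?thesis by simp
  qed
  also have "\<dots> \<ge> 0"
  proof (rule integral_nonneg_AE, intro AE_I2)
    fix x
    have "(\<Sum>i<?n. \<Sum>j<?n. (v $ i * v $ j) * Sf x N i j)
        = (\<Sum>i<?n. \<Sum>j<?n. \<Sum>l<N. (v $ i * bp x N i l) * (v $ j * bp x N j l))"
      unfolding Sf_def by (simp add: sum_distrib_left mult_ac)
    also have "\<dots> = (\<Sum>i<?n. \<Sum>l<N. \<Sum>j<?n. (v $ i * bp x N i l) * (v $ j * bp x N j l))"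
      by (rule sum.cong[OF refl], rule sum.swap)
    also have "\<dots> = (\<Sum>l<N. \<Sum>i<?n. \<Sum>j<?n. (v $ i * bp x N i l) * (v $ j * bp x N j l))"
      by (rule sum.swap)
    also have "\<dots> = (\<Sum>l<N. (\<Sum>i<?n. v $ i * bp x N i l) * (\<Sum>j<?n. v $ j * bp x N j l))"
      by (simp add: sum_product)
    also have "\<dots> \<ge> 0" by (intro sum_nonneg) simp
    finally show "0 \<le> (\<Sum>i<?n. \<Sum>j<?n. (v $ i * v $ j) * Sf x N i j)" .
  qed
  finally show ?thesis .
qed

lemma Bmat_bounds:
  assumes \<sigma>: "\<sigma> > 0"
  shows "lambda_max (Bmat T N \<sigma>) \<le> eig_sum (Bmat T N \<sigma>)"
    "eig_sum (Bmat T N \<sigma>) = (\<Sum>l<Suc T. Bent N \<sigma> l l)"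
    "Bent N \<sigma> T T * Bent N \<sigma> T T \<le> lambda_max (Bmat T N \<sigma>) * eig_sum (Bmat T N \<sigma>)"
proof -
  have sym: "Bmat T N \<sigma> $$ (i, j) = Bmat T N \<sigma> $$ (j, i)" if "i < Suc T" "j < Suc T" for i j
    using that by (simp add: Bmat_entry Bent_eq[of i j j i])
  note pb = psd_bounds[OF Bmat_carrier zero_less_Suc sym Bmat_psd[OF \<sigma>]]
  show "lambda_max (Bmat T N \<sigma>) \<le> eig_sum (Bmat T N \<sigma>)" by (rule pb(1))
  show "eig_sum (Bmat T N \<sigma>) = (\<Sum>l<Suc T. Bent N \<sigma> l l)"
  proof -
    have "eig_sum (Bmat T N \<sigma>) = mtr (Bmat T N \<sigma>)" by (rule pb(2))
    also have "\<dots> = (\<Sum>l<Suc T. Bmat T N \<sigma> $$ (l, l))" unfolding mtr_def using Bmat_carrier[of T N \<sigma>] by simp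
    also have "\<dots> = (\<Sum>l<Suc T. Bent N \<sigma> l l)" by (rule sum.cong[OF refl]) (simp add: Bmat_entry)
    finally show ?thesis .
  qed
  show "Bent N \<sigma> T T * Bent N \<sigma> T T \<le> lambda_max (Bmat T N \<sigma>) * eig_sum (Bmat T N \<sigma>)"
    using pb(3) by (simp add: Bmat_entry)
qed


lemma final_bounds:
  fixes L S u q :: real
  assumes u: "0 < u" and q: "0 \<le> q" and S: "S = u * (1 + q)" and sq: "u * u \<le> L * S" and LS: "L \<le> S"
  shows "1 / (1 + q)^2 \<le> L / S" "L / S \<le> 1" "1 / (1 + q) \<le> L / u" "L / u \<le> 1 + q"
proof -
  have Sp: "0 < S" using S u q by simp
  have "u * u \<le> u * (L * (1 + q))" using sq S by (simp add: mult_ac)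
  then have h: "u \<le> L * (1 + q)" using u by simp
  have h2: "u * (1 + q) \<le> L * (1 + q) * (1 + q)" using h q by (intro mult_right_mono) auto
  show "1 / (1 + q)^2 \<le> L / S" using h2 S Sp q by (simp add: divide_simps power2_eq_square mult_ac)
  show "L / S \<le> 1" using LS Sp by simp
  show "1 / (1 + q) \<le> L / u" using h u q by (simp add: divide_simps mult_ac)
  show "L / u \<le> 1 + q" using LS S u by (simp add: divide_simps mult_ac)
qed

theorem mainTheorem10:
  fixes N :: nat and \<sigma> :: real
  assumes "N \<ge> 1" and "\<sigma> > 0"
  shows "((\<lambda>T. lambda_max (Bmat T N \<sigma>) / eig_sum (Bmat T N \<sigma>)) \<longlongrightarrow> 1) at_top
       \<and> ((\<lambda>T. lambda_max (Bmat T N \<sigma>) / Bent N \<sigma> T T) \<longlongrightarrow> 1) at_top"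
proof -
  note N = assms(1) and \<sigma> = assms(2)
  define u where "u k = Bent N \<sigma> k k" for k
  have pos: "0 < u k" for k
  proof -
    obtain c where c: "0 < c" "\<And>k. c * 1 ^ k \<le> Bent N \<sigma> k k" using Bent_grow[OF \<sigma> N, of 1] by auto
    show ?thesis using c(1) c(2)[of k] unfolding u_def by simp
  qed
  have lc: "u (Suc k) ^ 2 \<le> u k * u (Suc (Suc k))" for k
  proof -
    define t where "t = u (Suc k) / u k"
    have t: "0 < t" unfolding t_def using pos by simp
    have "u (Suc k) \<le> (t * u k + u (Suc (Suc k)) / t) / 2"
      using Bent_logconv_aux[OF \<sigma> t, of N k] unfolding u_def .
    also have "t * u k = u (Suc k)" unfolding t_def using pos[of k] by simp
    finally have "u (Suc k) \<le> u (Suc (Suc k)) / t" by simp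
    also have "\<dots> = u (Suc (Suc k)) * u k / u (Suc k)" unfolding t_def using pos by simp
    finally show ?thesis using pos[of "Suc k"] by (simp add: divide_simps power2_eq_square mult_ac)
  qed
  have grow: "\<exists>c>0. \<forall>k. c * C ^ k \<le> u k" if "0 < C" for C
    using Bent_grow[OF \<sigma> N that] unfolding u_def .
  have qlim: "(\<lambda>T. (\<Sum>l<T. u l) / u T) \<longlonglongrightarrow> 0"
    by (rule ratio_tail[OF pos lc grow])
  define q where "q T = (\<Sum>l<T. u l) / u T" for T
  have qnn: "0 \<le> q T" for T unfolding q_def using pos by (intro divide_nonneg_pos sum_nonneg) (auto intro: less_imp_le)
  have Seq: "eig_sum (Bmat T N \<sigma>) = u T * (1 + q T)" for T
  proof -
    have "eig_sum (Bmat T N \<sigma>) = (\<Sum>l<Suc T. u l)" unfolding Bmat_bounds(2)[OF \<sigma>] u_def ..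
    also have "\<dots> = (\<Sum>l<T. u l) + u T" by (simp add: sum.lessThan_Suc)
    also have "\<dots> = u T * (1 + q T)" unfolding q_def using pos[of T] by (simp add: field_simps)
    finally show ?thesis .
  qed
  have fb: "1 / (1 + q T)^2 \<le> lambda_max (Bmat T N \<sigma>) / eig_sum (Bmat T N \<sigma>)"
    "lambda_max (Bmat T N \<sigma>) / eig_sum (Bmat T N \<sigma>) \<le> 1"
    "1 / (1 + q T) \<le> lambda_max (Bmat T N \<sigma>) / u T"
    "lambda_max (Bmat T N \<sigma>) / u T \<le> 1 + q T" for T
  proof -
    have sq: "u T * u T \<le> lambda_max (Bmat T N \<sigma>) * eig_sum (Bmat T N \<sigma>)"
      using Bmat_bounds(3)[OF \<sigma>, where T=T and N=N] unfolding u_def .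
    note fb0 = final_bounds[OF pos[of T] qnn[of T] Seq[of T] sq Bmat_bounds(1)[OF \<sigma>, where T=T and N=N]]
    show "1 / (1 + q T)^2 \<le> lambda_max (Bmat T N \<sigma>) / eig_sum (Bmat T N \<sigma>)" by (rule fb0(1))
    show "lambda_max (Bmat T N \<sigma>) / eig_sum (Bmat T N \<sigma>) \<le> 1" by (rule fb0(2))
    show "1 / (1 + q T) \<le> lambda_max (Bmat T N \<sigma>) / u T" by (rule fb0(3))
    show "lambda_max (Bmat T N \<sigma>) / u T \<le> 1 + q T" by (rule fb0(4))
  qed
  have q0: "q \<longlonglongrightarrow> 0" using qlim unfolding q_def .
  have a1: "(\<lambda>T. 1 + q T) \<longlonglongrightarrow> 1 + 0" by (intro tendsto_add tendsto_const q0)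
  have l1: "(\<lambda>T. 1 / (1 + q T)^2) \<longlonglongrightarrow> 1 / (1 + 0)^2"
    by (intro tendsto_divide tendsto_const tendsto_power a1) simp
  have l2: "(\<lambda>T. 1 / (1 + q T)) \<longlonglongrightarrow> 1 / (1 + 0)"
    by (intro tendsto_divide tendsto_const a1) simp
  have r1: "((\<lambda>T. lambda_max (Bmat T N \<sigma>) / eig_sum (Bmat T N \<sigma>)) \<longlongrightarrow> 1) at_top"
  proof (rule tendsto_sandwich[OF _ _ _ tendsto_const])
    show "((\<lambda>T. 1 / (1 + q T)^2) \<longlongrightarrow> 1) at_top" using l1 by simp
    show "eventually (\<lambda>T. 1 / (1 + q T)^2 \<le> lambda_max (Bmat T N \<sigma>) / eig_sum (Bmat T N \<sigma>)) at_top"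
      using fb(1) by simp
    show "eventually (\<lambda>T. lambda_max (Bmat T N \<sigma>) / eig_sum (Bmat T N \<sigma>) \<le> 1) at_top"
      using fb(2) by simp
  qed
  have r2: "((\<lambda>T. lambda_max (Bmat T N \<sigma>) / Bent N \<sigma> T T) \<longlongrightarrow> 1) at_top"
  proof (rule tendsto_sandwich)
    show "((\<lambda>T. 1 / (1 + q T)) \<longlongrightarrow> 1) at_top" using l2 by simp
    show "((\<lambda>T. 1 + q T) \<longlongrightarrow> 1) at_top" using a1 by simp
    show "eventually (\<lambda>T. 1 / (1 + q T) \<le> lambda_max (Bmat T N \<sigma>) / Bent N \<sigma> T T) at_top"
      using fb(3) unfolding u_def by simp
    show "eventually (\<lambda>T. lambda_max (Bmat T N \<sigma>) / Bent N \<sigma> T T \<le> 1 + q T) at_top"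
      using fb(4) unfolding u_def by simp
  qed
  show ?thesis using r1 r2 by blast
qed


end
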